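(* Let $q\geq 3$ be a prime power and let $k_1,k_2,l$ be non-negative integers such that $k_1=k_2=l+1\leq q-1$. Then there exists a linear $l$-intersection pair of two MDS codes over $\mathbb{F}_q$ both with parameters $[q,l+1,q-l]_q$.
   Context: An $[n,k,d]_q$ linear code is a $k$-dimensional subspace of $\mathbb{F}_q^n$ with minimum Hamming distance $d$; it is MDS if $d=n-k+1$. Two linear codes $C_1,C_2\subseteq\mathbb{F}_q^n$ form a linear $l$-intersection pair if $\dim(C_1\cap C_2)=l$. *)

theory Defs
  imports "HOL-Analysis.Analysis"
begin

definition hamming_dist :: "'a ^ 'n \<Rightarrow> 'a ^ 'n \<Rightarrow> nat" where
  "hamming_dist x y = card {i. x $ i \<noteq> y $ i}"

definition min_dist :: "('a ^ 'n) set \<Rightarrow> nat" where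
  "min_dist C = Min {hamming_dist x y | x y. x \<in> C \<and> y \<in> C \<and> x \<noteq> y}"

definition is_linear_code :: "('a::field ^ 'n) set \<Rightarrow> nat \<Rightarrow> nat \<Rightarrow> nat \<Rightarrow> bool" where
  "is_linear_code C n k d \<longleftrightarrow> n = CARD('n) \<and> vec.subspace C \<and> vec.dim C = k \<and> min_dist C = d"

definition is_MDS :: "('a::field ^ 'n) set \<Rightarrow> bool" where
  "is_MDS C \<longleftrightarrow> vec.subspace C \<and> min_dist C = CARD('n) - vec.dim C + 1"

definition is_l_intersection_pair :: "('a::field ^ 'n) set \<Rightarrow> ('a ^ 'n) set \<Rightarrow> nat \<Rightarrow> bool" where
  "is_l_intersection_pair C1 C2 l \<longleftrightarrow> vec.subspace C1 \<and> vec.subspace C2 \<and> vec.dim (C1 \<inter> C2) = l"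

end

theory Submission
  imports Defs "HOL-Computational_Algebra.Polynomial"
begin

definition evw :: "('n::finite \<Rightarrow> 'a::field) \<Rightarrow> ('n \<Rightarrow> 'a) \<Rightarrow> 'a poly \<Rightarrow> 'a ^ 'n" where
  "evw w e p = (\<chi> i. w i * poly p (e i))"

lemma evw_add: "evw w e (p + r) = evw w e p + evw w e r"
  by (simp add: evw_def vec_eq_iff algebra_simps)

lemma evw_smult: "evw w e (smult c p) = c *s evw w e p"
  by (simp add: evw_def vec_eq_iff algebra_simps)

lemma evw_0: "evw w e 0 = 0"
  by (simp add: evw_def vec_eq_iff)

lemma evw_diff: "evw w e (p - r) = evw w e p - evw w e r"
  by (simp add: evw_def vec_eq_iff algebra_simps)

lemma evw_sum: "evw w e (\<Sum>j\<in>J. f j) = (\<Sum>j\<in>J. evw w e (f j))"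
  by (simp add: evw_def vec_eq_iff poly_sum sum_distrib_left)

definition supp_polys :: "nat set \<Rightarrow> 'a::zero poly set" where
  "supp_polys J = {p. \<forall>n. n \<notin> J \<longrightarrow> coeff p n = 0}"

lemma subspace_evw: "vec.subspace (evw w e ` supp_polys J)"
  unfolding vec.subspace_def
proof (intro conjI ballI allI)
  show "0 \<in> evw w e ` supp_polys J"
    by (rule image_eqI[of _ _ 0]) (auto simp: evw_0 supp_polys_def)
next
  fix x y assume "x \<in> evw w e ` supp_polys J" "y \<in> evw w e ` supp_polys J"
  then obtain p r where "p \<in> supp_polys J" "r \<in> supp_polys J" "x = evw w e p" "y = evw w e r" by auto
  then show "x + y \<in> evw w e ` supp_polys J"
    by (intro image_eqI[of _ _ "p + r"]) (auto simp: evw_add supp_polys_def)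
next
  fix c x assume "x \<in> evw w e ` supp_polys J"
  then obtain p where "p \<in> supp_polys J" "x = evw w e p" by auto
  then show "c *s x \<in> evw w e ` supp_polys J"
    by (intro image_eqI[of _ _ "smult c p"]) (auto simp: evw_smult supp_polys_def)
qed

lemma span_evw:
  assumes "finite J"
  shows "vec.span ((\<lambda>j. evw w e (monom 1 j)) ` J) = evw w e ` supp_polys J"
proof
  show "vec.span ((\<lambda>j. evw w e (monom 1 j)) ` J) \<subseteq> evw w e ` supp_polys J"
    by (rule vec.span_minimal[OF _ subspace_evw]) (auto simp: supp_polys_def coeff_monom)
next
  show "evw w e ` supp_polys J \<subseteq> vec.span ((\<lambda>j. evw w e (monom 1 j)) ` J)"
  proof
    fix x assume "x \<in> evw w e ` supp_polys J"
    then obtain p where p: "p \<in> supp_polys J" and x: "x = evw w e p" by auto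
    have "p = (\<Sum>j\<in>J. smult (coeff p j) (monom 1 j))"
    proof (rule poly_eqI)
      fix n
      have "coeff (\<Sum>j\<in>J. smult (coeff p j) (monom 1 j)) n = (\<Sum>j\<in>J. if j = n then coeff p j else 0)"
        by (simp add: coeff_sum coeff_monom) (rule sum.cong, auto)
      also have "\<dots> = coeff p n"
        using p assms by (simp add: sum.delta' supp_polys_def)
      finally show "coeff p n = coeff (\<Sum>j\<in>J. smult (coeff p j) (monom 1 j)) n" by simp
    qed
    then have "x = (\<Sum>j\<in>J. coeff p j *s evw w e (monom 1 j))"
      using x by (metis (no_types, lifting) evw_smult evw_sum sum.cong)
    also have "\<dots> \<in> vec.span ((\<lambda>j. evw w e (monom 1 j)) ` J)"
      by (intro vec.span_sum vec.span_scale vec.span_base) auto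
    finally show "x \<in> vec.span ((\<lambda>j. evw w e (monom 1 j)) ` J)" .
  qed
qed

lemma roots_vimage:
  fixes e :: "'n::finite \<Rightarrow> 'a::{finite,field}"
  assumes "bij e" "p \<noteq> 0"
  shows "card {i. poly p (e i) = 0} \<le> degree p"
proof -
  have "{i. poly p (e i) = 0} = e -` {x. poly p x = 0}" by auto
  moreover have "card (e -` {x. poly p x = 0}) = card {x. poly p x = 0}"
    using assms(1) by (intro card_vimage_inj) (auto simp: bij_def)
  ultimately show ?thesis using card_poly_roots_bound[OF assms(2)] by simp
qed

lemma evw_zero_imp:
  fixes e :: "'n::finite \<Rightarrow> 'a::{finite,field}"
  assumes "bij e" "\<forall>i. w i \<noteq> 0" "degree p < CARD('n)" "evw w e p = 0"
  shows "p = 0"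
proof (rule ccontr)
  assume "p \<noteq> 0"
  have "{i. poly p (e i) = 0} = UNIV"
    using assms(2,4) by (auto simp: evw_def vec_eq_iff)
  then show False using roots_vimage[OF assms(1) \<open>p \<noteq> 0\<close>] assms(3) by simp
qed

lemma indep_evw:
  fixes e :: "'n::finite \<Rightarrow> 'a::{finite,field}"
  assumes "bij e" "\<forall>i. w i \<noteq> 0" "finite J" "\<forall>j\<in>J. j < CARD('n)"
  shows "vec.independent ((\<lambda>j. evw w e (monom 1 j)) ` J)"
    and "card ((\<lambda>j. evw w e (monom 1 j)) ` J) = card J"
proof -
  let ?g = "\<lambda>j. evw w e (monom 1 j)"
  have inj: "inj_on ?g J"
  proof
    fix a b assume ab: "a \<in> J" "b \<in> J" "?g a = ?g b"
    have "evw w e (monom 1 a - monom 1 b) = 0" using ab by (simp add: evw_diff)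
    moreover have "degree (monom (1::'a) a - monom 1 b) < CARD('n)"
    proof -
      have "max a b < CARD('n)" using ab assms(4) by auto
      then show ?thesis using degree_diff_le_max[of "monom (1::'a) a" "monom 1 b", unfolded degree_monom_eq[OF one_neq_zero]]
        by (intro le_less_trans[OF _ \<open>max a b < CARD('n)\<close>]) simp
    qed
    ultimately have "monom (1::'a) a - monom 1 b = 0" using evw_zero_imp assms by blast
    then show "a = b" by (metis eq_iff_diff_eq_0 monom_eq_iff' one_neq_zero)
  qed
  then show "card (?g ` J) = card J" by (rule card_image)
  show "vec.independent (?g ` J)"
  proof (rule vec.independent_if_scalars_zero)
    show "finite (?g ` J)" using assms(3) by simp
  next
    fix f x assume s: "(\<Sum>x\<in>?g ` J. f x *s x) = 0" and x: "x \<in> ?g ` J"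
    then obtain j where j: "j \<in> J" "x = ?g j" by auto
    define P where "P = (\<Sum>j\<in>J. monom (f (?g j)) j)"
    have cP: "coeff P n = (if n \<in> J then f (?g n) else 0)" for n
      using assms(3) by (simp add: P_def coeff_sum coeff_monom)
    have "(\<Sum>x\<in>?g ` J. f x *s x) = (\<Sum>j\<in>J. f (?g j) *s ?g j)"
      using inj by (simp add: sum.reindex)
    also have "\<dots> = evw w e P"
      by (simp add: P_def evw_sum smult_monom flip: evw_smult)
    finally have "evw w e P = 0" using s by simp
    moreover have "degree P < CARD('n)"
    proof -
      have "CARD('n) > 0" by simp
      have "degree P \<le> CARD('n) - 1"
        by (rule degree_le) (use cP assms(4) in \<open>auto\<close>)
      then show ?thesis using \<open>CARD('n) > 0\<close> by linarith
    qed
    ultimately have "P = 0" using evw_zero_imp assms by blast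
    then have "coeff P j = 0" by simp
    then show "f x = 0" using cP j by simp
  qed
qed

lemma hd_diff: "hamming_dist x y = card {i. (x - y) $ i \<noteq> (0::'a::ab_group_add)}"
  unfolding hamming_dist_def by (simp add: right_minus_eq)

lemma supp_lt_deg:
  assumes "p \<in> supp_polys {..<k}" "1 \<le> k"
  shows "degree p \<le> k - 1"
  using assms by (intro degree_le) (auto simp: supp_polys_def)

lemma card_UNIV_eq:
  fixes e :: "'n::finite \<Rightarrow> 'a::{finite,field}"
  assumes "bij e" shows "CARD('n) = CARD('a)"
  using bij_betw_same_card[OF assms[unfolded bij_betw_def[symmetric]]] assms
  by (simp add: bij_betw_same_card)

lemma card_vimage_bij:
  fixes e :: "'n::finite \<Rightarrow> 'a::{finite,field}"
  assumes "bij e" shows "card {i. P (e i)} = card {x. P x}"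
proof -
  have "{i. P (e i)} = e -` {x. P x}" by auto
  then show ?thesis using assms card_vimage_inj[of e "{x. P x}"] by (simp add: bij_def)
qed

lemma min_dist_evw:
  fixes e :: "'n::finite \<Rightarrow> 'a::{finite,field}"
  assumes "bij e" "\<forall>i. w i \<noteq> 0" "1 \<le> k" "k \<le> CARD('n)"
  shows "min_dist (evw w e ` supp_polys {..<k}) = CARD('n) - k + 1"
proof -
  let ?C = "evw w e ` supp_polys {..<k}"
  let ?S = "{hamming_dist x y | x y. x \<in> ?C \<and> y \<in> ?C \<and> x \<noteq> y}"
  have nz: "card {i. w i * poly d (e i) \<noteq> 0} = CARD('n) - card {x. poly d x = 0}" for d
  proof -
    have "{i. w i * poly d (e i) \<noteq> 0} = UNIV - {i. poly d (e i) = 0}" using assms(2) by auto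
    then have "card {i. w i * poly d (e i) \<noteq> 0} = CARD('n) - card {i. poly d (e i) = 0}"
      by (simp add: card_Diff_subset)
    then show ?thesis using card_vimage_bij[OF assms(1), of "\<lambda>x. poly d x = 0"] by simp
  qed
  have fin: "finite ?S"
  proof (rule finite_subset)
    show "?S \<subseteq> {..CARD('n)}" unfolding hamming_dist_def by (auto intro: card_mono)
  qed simp
  have lower: "CARD('n) - k + 1 \<le> s" if "s \<in> ?S" for s
  proof -
    obtain p r where pr: "p \<in> supp_polys {..<k}" "r \<in> supp_polys {..<k}"
      "evw w e p \<noteq> evw w e r" "s = hamming_dist (evw w e p) (evw w e r)"
      using \<open>s \<in> ?S\<close> by auto
    define d where "d = p - r"
    have "d \<noteq> 0" using pr(3) by (auto simp: d_def)
    have "d \<in> supp_polys {..<k}" using pr by (auto simp: supp_polys_def d_def)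
    then have "degree d \<le> k - 1" using supp_lt_deg assms(3) by blast
    then have "card {x. poly d x = 0} \<le> k - 1" using card_poly_roots_bound[OF \<open>d \<noteq> 0\<close>] by simp
    moreover have "s = card {i. w i * poly d (e i) \<noteq> 0}"
      using pr(4) by (simp add: hd_diff flip: evw_diff) (simp add: evw_def d_def)
    ultimately show ?thesis using nz[of d] assms(3,4) by simp
  qed
  have attain: "CARD('n) - k + 1 \<in> ?S"
  proof -
    have "k - 1 \<le> CARD('a)" using assms card_UNIV_eq[OF assms(1)] by simp
    then obtain A :: "'a set" where A: "card A = k - 1" "finite A"
      by (meson obtain_subset_with_card_n)
    define P where "P = (\<Prod>a\<in>A. [:- a, 1:])"
    have "degree P \<le> sum (degree \<circ> (\<lambda>a. [:- a, 1:])) A"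
      unfolding P_def by (rule degree_prod_sum_le[OF A(2)])
    then have dP: "degree P \<le> k - 1" using A by simp
    have roots: "{x. poly P x = 0} = A"
      using A(2) by (auto simp: P_def poly_prod)
    have Psupp: "P \<in> supp_polys {..<k}"
      unfolding supp_polys_def using dP assms(3) by (auto intro!: coeff_eq_0)
    have h: "hamming_dist (evw w e P) (evw w e 0) = CARD('n) - k + 1"
      using nz[of P] A assms(3,4) by (simp add: hd_diff roots evw_def)
    then have "evw w e P \<noteq> evw w e 0" using assms(4)
      by (auto simp: hamming_dist_def)
    moreover have "(0::'a poly) \<in> supp_polys {..<k}" by (simp add: supp_polys_def)
    ultimately show ?thesis using h Psupp by (metis (mono_tags, lifting) image_eqI mem_Collect_eq)
  qed
  show ?thesis unfolding min_dist_def
    by (rule Min_eqI[OF fin lower attain])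
qed

lemma dim_evw:
  fixes e :: "'n::finite \<Rightarrow> 'a::{finite,field}"
  assumes "bij e" "\<forall>i. w i \<noteq> 0" "finite J" "\<forall>j\<in>J. j < CARD('n)"
  shows "vec.dim (evw w e ` supp_polys J) = card J"
proof -
  have "vec.dim (evw w e ` supp_polys J) = vec.dim (vec.span ((\<lambda>j. evw w e (monom 1 j)) ` J))"
    by (simp add: span_evw[OF assms(3)])
  also have "\<dots> = card ((\<lambda>j. evw w e (monom 1 j)) ` J)"
    by (rule vec.dim_span_eq_card_independent[OF indep_evw(1)[OF assms]])
  also have "\<dots> = card J" by (rule indep_evw(2)[OF assms])
  finally show ?thesis .
qed

lemma inter_evw:
  fixes e :: "'n::finite \<Rightarrow> 'a::{finite,field}"
  assumes "bij e" "c \<noteq> 0" "c \<noteq> 1" "1 \<le> k" "k < CARD('n)"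
  shows "evw (\<lambda>_. 1) e ` supp_polys {..<k} \<inter> evw (\<lambda>i. if e i = 0 then c else 1) e ` supp_polys {..<k}
         = evw (\<lambda>_. 1) e ` supp_polys {1..<k}"
    (is "?C1 \<inter> ?C2 = ?D")
proof
  show "?D \<subseteq> ?C1 \<inter> ?C2"
  proof
    fix x assume "x \<in> ?D"
    then obtain p where p: "p \<in> supp_polys {1..<k}" "x = evw (\<lambda>_. 1) e p" by auto
    have p1: "p \<in> supp_polys {..<k}" using p(1) by (auto simp: supp_polys_def)
    have "coeff p 0 = 0" using p(1) by (auto simp: supp_polys_def)
    then have "poly p 0 = 0" by (simp add: poly_0_coeff_0)
    then have "x = evw (\<lambda>i. if e i = 0 then c else 1) e p"
      using p(2) by (auto simp: evw_def vec_eq_iff)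
    then show "x \<in> ?C1 \<inter> ?C2" using p1 p(2) by blast
  qed
next
  show "?C1 \<inter> ?C2 \<subseteq> ?D"
  proof
    fix x assume "x \<in> ?C1 \<inter> ?C2"
    then obtain p r where p: "p \<in> supp_polys {..<k}" "x = evw (\<lambda>_. 1) e p"
      and r: "r \<in> supp_polys {..<k}" "x = evw (\<lambda>i. if e i = 0 then c else 1) e r" by blast
    have eq: "poly p (e i) = (if e i = 0 then c else 1) * poly r (e i)" for i
      using p(2) r(2) by (auto simp: evw_def vec_eq_iff)
    have "p = r"
    proof (rule ccontr)
      assume "p \<noteq> r"
      then have d0: "p - r \<noteq> 0" by simp
      have "p - r \<in> supp_polys {..<k}" using p r by (auto simp: supp_polys_def)
      then have "degree (p - r) \<le> k - 1" using supp_lt_deg assms(4) by blast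
      then have "card {x. poly (p - r) x = 0} \<le> k - 1" using card_poly_roots_bound[OF d0] by simp
      moreover have "UNIV - {0} \<subseteq> {x. poly (p - r) x = 0}"
      proof
        fix y :: 'a assume "y \<in> UNIV - {0}"
        obtain i where "e i = y" using assms(1) by (metis bij_pointE)
        then show "y \<in> {x. poly (p - r) x = 0}" using eq[of i] \<open>y \<in> UNIV - {0}\<close> by auto
      qed
      then have "card (UNIV - {0::'a}) \<le> card {x. poly (p - r) x = 0}" by (intro card_mono) auto
      moreover have "card (UNIV - {0::'a}) = CARD('a) - 1" by (simp add: card_Diff_subset)
      ultimately show False using assms(4,5) card_UNIV_eq[OF assms(1)] by simp
    qed
    obtain i0 where "e i0 = 0" using assms(1) by (metis bij_pointE)
    then have "poly p 0 = c * poly p 0" using eq[of i0] \<open>p = r\<close> by simp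
    then have "poly p 0 = 0" using assms(3)
      by (metis mult_cancel_right2)
    then have "coeff p 0 = 0" by (simp add: poly_0_coeff_0)
    then have "p \<in> supp_polys {1..<k}" using p(1) unfolding supp_polys_def
    proof (intro CollectI allI impI)
      fix n assume "n \<notin> {1..<k}"
      then have "n = 0 \<or> n \<notin> {..<k}" by auto
      then show "coeff p n = 0" using \<open>coeff p 0 = 0\<close> p(1) by (auto simp: supp_polys_def)
    qed
    then show "x \<in> ?D" using p(2) by auto
  qed
qed

theorem theorem3:
  fixes q k1 k2 l :: nat
  assumes "CARD('a::{finite,field}) = q"
    and "CARD('n::finite) = q"
    and "q \<ge> 3"
    and "k1 = l + 1" and "k2 = l + 1" and "l + 1 \<le> q - 1"
  shows "\<exists>C1 C2 :: ('a ^ 'n) set.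
           is_linear_code C1 q k1 (q - l) \<and> is_linear_code C2 q k2 (q - l) \<and>
           is_MDS C1 \<and> is_MDS C2 \<and> is_l_intersection_pair C1 C2 l"
proof -
  obtain e :: "'n \<Rightarrow> 'a" where e: "bij e"
    using finite_same_card_bij[of "UNIV :: 'n set" "UNIV :: 'a set"] assms(1,2)
    by (auto simp: bij_betw_def bij_def)
  have "\<exists>c::'a. c \<noteq> 0 \<and> c \<noteq> 1"
  proof (rule ccontr)
    assume "\<not> ?thesis"
    then have "(UNIV::'a set) \<subseteq> {0, 1}" by auto
    then have "CARD('a) \<le> card {0::'a, 1}" by (intro card_mono) auto
    also have "\<dots> \<le> 2" by (simp add: card_insert_le_m1)
    finally show False using assms(1,3) by simp
  qed
  then obtain c :: 'a where c: "c \<noteq> 0" "c \<noteq> 1" by blast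
  define k where "k = l + 1"
  define w where "w = (\<lambda>i. if e i = 0 then c else (1::'a))"
  define C1 where "C1 = evw (\<lambda>_. 1) e ` supp_polys {..<k}"
  define C2 where "C2 = evw w e ` supp_polys {..<k}"
  have w1: "\<forall>i. (\<lambda>_. 1::'a) i \<noteq> 0" by simp
  have w2: "\<forall>i. w i \<noteq> 0" using c by (simp add: w_def)
  have kq: "1 \<le> k" "k < CARD('n)" "k \<le> CARD('n)" using assms k_def by auto
  have jl: "\<forall>j\<in>{..<k}. j < CARD('n)" using kq by auto
  have s1: "vec.subspace C1" "vec.subspace C2" unfolding C1_def C2_def by (rule subspace_evw)+
  have d1: "vec.dim C1 = k" "vec.dim C2 = k" unfolding C1_def C2_def
    using dim_evw[OF e w1 _ jl] dim_evw[OF e w2 _ jl] by simp_all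
  have m1: "min_dist C1 = CARD('n) - k + 1" "min_dist C2 = CARD('n) - k + 1" unfolding C1_def C2_def
    using min_dist_evw[OF e w1 kq(1,3)] min_dist_evw[OF e w2 kq(1,3)] by simp_all
  have qk: "CARD('n) - k + 1 = q - l" using assms kq k_def by simp
  have "C1 \<inter> C2 = evw (\<lambda>_. 1) e ` supp_polys {1..<k}"
    unfolding C1_def C2_def w_def by (rule inter_evw[OF e c kq(1,2)])
  then have "vec.dim (C1 \<inter> C2) = card {1..<k}"
    using dim_evw[OF e w1, of "{1..<k}"] kq by simp
  then have i: "vec.dim (C1 \<inter> C2) = l" by (simp add: k_def)
  show ?thesis
    apply (rule exI[of _ C1], rule exI[of _ C2])
    using s1 d1 m1 qk i assms(2,4,5) unfolding is_linear_code_def is_MDS_def is_l_intersection_pair_def k_def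
    by simp
qed

end
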